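(* Let $q$ be a prime power and let $C_1=[n,k_1,d_1]_q$ and $C_2=[n,k_2,d_2]_q$ be linear codes over $\mathbb{F}_q$ with $C_2\subset C_1$ (giving, via the CSS construction, an AQECC $[[n,k,d_z/d_x]]_q$ with $k=k_1-k_2$). Let $C_2^{e}$ be the extended code of $C_2$ and $(d_2^{e})^{\perp}$ the minimum distance of its Euclidean dual $(C_2^{e})^{\perp}$. Then: (a) if $(d_1)_{even}\leq (d_1)_{odd}$, there exists an AQECC $[[n+1,k,d_z^{e}/d_x^{e}]]_q$ with $d_z^{e}\geq d_1$ and $d_x^{e}\geq (d_2^{e})^{\perp}$; (b) if $(d_1)_{odd}<(d_1)_{even}$, there exists an AQECC $[[n+1,k,d_z^{e}/d_x^{e}]]_q$ with $d_z^{e}\geq d_1+1$ and $d_x^{e}\geq (d_2^{e})^{\perp}$.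
   Context: An AQECC $[[n,k,d_z/d_x]]_q$ is a $q^k$-dimensional subspace of $\mathbb{C}^{q^n}$ correcting all qudit-flip errors up to $\lfloor (d_x-1)/2\rfloor$ and all phase-shift errors up to $\lfloor (d_z-1)/2\rfloor$. CSS construction: if $C_2\subset C_1\subseteq\mathbb{F}_q^n$ are linear of dimensions $k_2<k_1$, there is an AQECC $[[n,k_1-k_2,d_z/d_x]]_q$ with $d_z=\mathrm{wt}(C_1\setminus C_2)$, $d_x=\mathrm{wt}(C_2^{\perp}\setminus C_1^{\perp})$. The extended code of a linear code $C\subseteq\mathbb{F}_q^n$ is $C^{e}=\{(x_1,\dots,x_{n+1}): (x_1,\dots,x_n)\in C,\ x_1+\cdots+x_{n+1}=0\}$. A vector is even-like if its coordinates sum to $0$ and odd-like otherwise; for a code $C$ with minimum distance $d$, $(d)_{even}$ (resp. $(d)_{odd}$) denotes the minimum weight of the nonzero even-like (resp. odd-like) codewords of $C$. *)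

theory Defs
  imports Main "HOL-Library.Extended_Nat"
begin

text \<open>Vectors of F_q^n are lists of length n over a finite field 'a (q = CARD('a)).\<close>

definition hw :: "'a::zero list \<Rightarrow> nat" where
  "hw v = card {i. i < length v \<and> v ! i \<noteq> 0}"

definition nonzero_vec :: "'a::zero list \<Rightarrow> bool" where
  "nonzero_vec v \<longleftrightarrow> v \<noteq> replicate (length v) 0"

definition linear_code :: "nat \<Rightarrow> 'a::field list set \<Rightarrow> bool" where
  "linear_code n C \<longleftrightarrow> C \<subseteq> {v. length v = n} \<and> replicate n 0 \<in> C \<and>
     (\<forall>u\<in>C. \<forall>v\<in>C. map2 (+) u v \<in> C) \<and> (\<forall>a. \<forall>u\<in>C. map ((*) a) u \<in> C)"

definition code_dim :: "'a::{finite,field} list set \<Rightarrow> nat" where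
  "code_dim C = (THE k. card C = card (UNIV::'a set) ^ k)"

definition dotp :: "'a::field list \<Rightarrow> 'a list \<Rightarrow> 'a" where
  "dotp u v = sum_list (map2 (*) u v)"

definition dual_code :: "nat \<Rightarrow> 'a::field list set \<Rightarrow> 'a list set" where
  "dual_code n C = {v. length v = n \<and> (\<forall>c\<in>C. dotp c v = 0)}"

definition extended_code :: "nat \<Rightarrow> 'a::field list set \<Rightarrow> 'a list set" where
  "extended_code n C = {x. length x = n + 1 \<and> take n x \<in> C \<and> sum_list x = 0}"

text \<open>Minimum weight of a set of vectors (infinity for the empty set).\<close>
definition wt_set :: "'a::zero list set \<Rightarrow> enat" where
  "wt_set S = Inf ((\<lambda>v. enat (hw v)) ` S)"

definition min_dist :: "'a::zero list set \<Rightarrow> enat" where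
  "min_dist C = wt_set {c\<in>C. nonzero_vec c}"

definition d_even :: "'a::{zero,monoid_add} list set \<Rightarrow> enat" where
  "d_even C = wt_set {c\<in>C. nonzero_vec c \<and> sum_list c = 0}"

definition d_odd :: "'a::{zero,monoid_add} list set \<Rightarrow> enat" where
  "d_odd C = wt_set {c\<in>C. nonzero_vec c \<and> sum_list c \<noteq> 0}"

definition css_aqecc :: "'a::{finite,field} itself \<Rightarrow> nat \<Rightarrow> nat \<Rightarrow> enat \<Rightarrow> enat \<Rightarrow> bool" where
  "css_aqecc _ n k dz dx \<longleftrightarrow> (\<exists>(D1::'a list set) D2.
     linear_code n D1 \<and> linear_code n D2 \<and> D2 \<subset> D1 \<and>
     code_dim D1 - code_dim D2 = k \<and>
     dz = wt_set (D1 - D2) \<and> dx = wt_set (dual_code n D2 - dual_code n D1))"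

end

theory Submission
  imports Defs
begin

lemma sum_map2_plus: "length u = length v \<Longrightarrow> sum_list (map2 (+) u v) = sum_list u + sum_list (v::'a::comm_monoid_add list)"
proof (induction u arbitrary: v)
  case Nil then show ?case by simp
next
  case (Cons a u) then show ?case by (cases v) (auto simp: add_ac)
qed

lemma sum_map_mult: "sum_list (map ((*) a) u) = a * sum_list (u::'a::field list)"
  by (induction u) (auto simp: algebra_simps)

lemma hw_snoc: "hw (xs @ [a]) = hw xs + (if a \<noteq> 0 then 1 else 0)"
proof -
  have "{i. i < length (xs @ [a]) \<and> (xs @ [a]) ! i \<noteq> 0} =
        {i. i < length xs \<and> xs ! i \<noteq> 0} \<union> (if a \<noteq> 0 then {length xs} else {})"
    by (auto simp: nth_append less_Suc_eq split: if_splits)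
  then show ?thesis unfolding hw_def by (auto simp: card_insert_if)
qed

lemma dot_zero: "sum_list (map2 (*) c (replicate m (0::'a::field))) = 0"
proof (induction c arbitrary: m)
  case Nil then show ?case by simp
next
  case (Cons a c) then show ?case by (cases m) auto
qed

lemma ext_split2:
  assumes "length x = Suc n"
  shows "x = take n x @ [x ! n]"
proof -
  have "drop n x = [x ! n]" using assms
    by (metis Cons_nth_drop_Suc diff_Suc_1 drop_all le_refl length_drop lessI
        length_0_conv diff_self_eq_0 list.size(3) Suc_n_not_le_n)
  then show ?thesis by (metis append_take_drop_id)
qed

lemma ext_mem:
  assumes "x \<in> extended_code n C"
  shows "take n x \<in> C" "x = take n x @ [- sum_list (take n x)]" "length x = Suc n"
proof -
  show "take n x \<in> C" using assms by (simp add: extended_code_def)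
  have l: "length x = Suc n" using assms by (simp add: extended_code_def)
  then show "length x = Suc n" .
  have e: "x = take n x @ [x ! n]" using ext_split2[OF l] .
  have "sum_list x = 0" using assms by (simp add: extended_code_def)
  then have "sum_list (take n x) + x ! n = 0" using e by (metis sum_list_append sum_list_simps(1,2) add_0_right)
  then have "x ! n = - sum_list (take n x)" by (simp add: eq_neg_iff_add_eq_0 add.commute)
  then show "x = take n x @ [- sum_list (take n x)]" using e by simp
qed

lemma ext_intro:
  assumes "c \<in> C" "C \<subseteq> {v. length v = n}"
  shows "c @ [- sum_list c] \<in> extended_code n C"
  using assms by (auto simp: extended_code_def)

lemma ext_linear:
  assumes "linear_code n C"
  shows "linear_code (n + 1) (extended_code n C)"
proof -
  have L: "C \<subseteq> {v. length v = n}" "replicate n 0 \<in> C"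
    "\<And>u v. u \<in> C \<Longrightarrow> v \<in> C \<Longrightarrow> map2 (+) u v \<in> C" "\<And>a u. u \<in> C \<Longrightarrow> map ((*) a) u \<in> C"
    using assms by (auto simp: linear_code_def)
  show ?thesis unfolding linear_code_def
  proof (intro conjI ballI allI)
    show "extended_code n C \<subseteq> {v. length v = n + 1}" by (auto simp: extended_code_def)
    show "replicate (n + 1) 0 \<in> extended_code n C"
    proof -
      have "take n (replicate (n + 1) (0::'a)) = replicate n 0" by (simp add: take_replicate del: replicate_Suc replicate.simps)
      moreover have "sum_list (replicate (n + 1) (0::'a)) = 0" by (metis sum_list_replicate mult_zero_right)
      ultimately show ?thesis using L(2) by (simp add: extended_code_def del: replicate.simps)
    qed
  next
    fix u v assume u: "u \<in> extended_code n C" and v: "v \<in> extended_code n C"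
    then have lu: "length u = n+1" and lv: "length v = n+1" and su: "sum_list u = 0" and sv: "sum_list v = 0"
      and tu: "take n u \<in> C" and tv: "take n v \<in> C" by (auto simp: extended_code_def)
    have "take n (map2 (+) u v) = map2 (+) (take n u) (take n v)" by (simp add: take_map take_zip)
    then show "map2 (+) u v \<in> extended_code n C"
      using L(3)[OF tu tv] lu lv su sv sum_map2_plus[of u v] by (auto simp: extended_code_def)
  next
    fix a u assume u: "u \<in> extended_code n C"
    then have lu: "length u = n+1" and su: "sum_list u = 0" and tu: "take n u \<in> C"
      by (auto simp: extended_code_def)
    show "map ((*) a) u \<in> extended_code n C"
      using L(4)[OF tu, of a] lu su sum_map_mult[of a u] by (auto simp: extended_code_def take_map)
  qed
qed

lemma ext_card:
  assumes "C \<subseteq> {v. length v = n}"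
  shows "card (extended_code n C) = card (C :: 'a::field list set)"
proof -
  have "bij_betw (take n) (extended_code n C) C"
  proof (rule bij_betw_imageI)
    show "inj_on (take n) (extended_code n C)"
      by (rule inj_onI) (metis ext_mem(2))
    show "take n ` extended_code n C = C"
    proof
      show "take n ` extended_code n C \<subseteq> C" using ext_mem(1) by blast
      show "C \<subseteq> take n ` extended_code n C"
      proof
        fix c assume c: "c \<in> C"
        then have "c @ [- sum_list c] \<in> extended_code n C" using ext_intro assms by blast
        moreover have "take n (c @ [- sum_list c]) = c" using c assms by auto
        ultimately show "c \<in> take n ` extended_code n C" by (metis image_eqI)
      qed
    qed
  qed
  then show ?thesis by (rule bij_betw_same_card)
qed

lemma ext_dim:
  assumes "C \<subseteq> {v. length v = n}"
  shows "code_dim (extended_code n C) = code_dim (C :: 'a::{finite,field} list set)"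
  unfolding code_dim_def using ext_card[OF assms] by simp

lemma ext_psubset:
  assumes "linear_code n C1" "linear_code n C2" "C2 \<subset> C1"
  shows "extended_code n C2 \<subset> extended_code n C1"
proof -
  have "extended_code n C2 \<subseteq> extended_code n C1" using assms(3) by (auto simp: extended_code_def)
  moreover obtain c where c: "c \<in> C1" "c \<notin> C2" using assms(3) by blast
  have L: "C1 \<subseteq> {v. length v = n}" using assms(1) by (simp add: linear_code_def)
  have "c @ [- sum_list c] \<in> extended_code n C1" using ext_intro[OF c(1) L] .
  moreover have "c @ [- sum_list c] \<notin> extended_code n C2" using c L by (auto simp: extended_code_def)
  ultimately show ?thesis by blast
qed

lemma wt_set_ge: "(\<And>v. v \<in> S \<Longrightarrow> m \<le> enat (hw v)) \<Longrightarrow> m \<le> wt_set S"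
  unfolding wt_set_def by (auto intro: Inf_greatest)

lemma wt_set_le: "v \<in> S \<Longrightarrow> wt_set S \<le> enat (hw v)"
  unfolding wt_set_def by (auto intro: Inf_lower)

lemma ext_weight:
  assumes "linear_code n C" "x \<in> extended_code n C" "nonzero_vec x"
  shows "nonzero_vec (take n x) \<and> hw x = hw (take n x) + (if sum_list (take n x) \<noteq> 0 then 1 else 0)"
proof -
  have e: "x = take n x @ [- sum_list (take n x)]" and l: "length x = Suc n" using ext_mem[OF assms(2)] by auto
  have hw: "hw x = hw (take n x) + (if sum_list (take n x) \<noteq> 0 then 1 else 0)"
    using hw_snoc[of "take n x" "- sum_list (take n x)"] e by simp
  have "nonzero_vec (take n x)"
  proof (rule ccontr)
    assume "\<not> nonzero_vec (take n x)"
    then have t: "take n x = replicate n 0" using l by (simp add: nonzero_vec_def)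
    then have "x = replicate n 0 @ [0]" using e by (simp add: sum_list_replicate)
    then have "x = replicate (length x) 0" by (simp add: replicate_append_same)
    then show False using assms(3) by (simp add: nonzero_vec_def)
  qed
  with hw show ?thesis by simp
qed

theorem theorem8:
  fixes C1 C2 :: "'a::{finite,field} list set" and n :: nat
  assumes "linear_code n C1" and "linear_code n C2" and "C2 \<subset> C1"
  shows "(d_even C1 \<le> d_odd C1 \<longrightarrow>
            (\<exists>dz dx. css_aqecc TYPE('a) (n + 1) (code_dim C1 - code_dim C2) dz dx \<and>
               dz \<ge> min_dist C1 \<and> dx \<ge> min_dist (dual_code (n + 1) (extended_code n C2))))
       \<and> (d_odd C1 < d_even C1 \<longrightarrow>
            (\<exists>dz dx. css_aqecc TYPE('a) (n + 1) (code_dim C1 - code_dim C2) dz dx \<and>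
               dz \<ge> min_dist C1 + 1 \<and> dx \<ge> min_dist (dual_code (n + 1) (extended_code n C2))))"
proof -
  define D1 where "D1 = extended_code n C1"
  define D2 where "D2 = extended_code n C2"
  have L1: "C1 \<subseteq> {v. length v = n}" and L2: "C2 \<subseteq> {v. length v = n}"
    using assms by (auto simp: linear_code_def)
  have css: "css_aqecc TYPE('a) (n + 1) (code_dim C1 - code_dim C2) (wt_set (D1 - D2))
      (wt_set (dual_code (n+1) D2 - dual_code (n+1) D1))"
    unfolding css_aqecc_def
    apply (rule exI[of _ D1], rule exI[of _ D2])
    using ext_linear[OF assms(1)] ext_linear[OF assms(2)] ext_psubset[OF assms]
      ext_dim[OF L1] ext_dim[OF L2] by (simp add: D1_def D2_def)
  have z2: "replicate (n+1) 0 \<in> D2" using ext_linear[OF assms(2)] by (simp add: linear_code_def D2_def)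
  have z1: "replicate (n+1) 0 \<in> dual_code (n+1) D1" by (simp add: dual_code_def dotp_def dot_zero del: replicate.simps)
  have dx: "min_dist (dual_code (n + 1) D2) \<le> wt_set (dual_code (n+1) D2 - dual_code (n+1) D1)"
    unfolding min_dist_def
  proof (rule wt_set_ge)
    fix v assume v: "v \<in> dual_code (n+1) D2 - dual_code (n+1) D1"
    then have "length v = n+1" by (simp add: dual_code_def)
    then have "nonzero_vec v" using v z1 by (auto simp: nonzero_vec_def)
    then show "wt_set {c \<in> dual_code (n + 1) D2. nonzero_vec c} \<le> enat (hw v)"
      using v by (intro wt_set_le) auto
  qed
  have key: "\<And>x. x \<in> D1 - D2 \<Longrightarrow> nonzero_vec (take n x) \<and> take n x \<in> C1 \<and>
      hw x = hw (take n x) + (if sum_list (take n x) \<noteq> 0 then 1 else 0)"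
  proof -
    fix x assume x: "x \<in> D1 - D2"
    then have "length x = n+1" by (simp add: D1_def extended_code_def)
    then have "nonzero_vec x" using x z2 by (auto simp: nonzero_vec_def)
    then show "?thesis x" using ext_weight[OF assms(1), of x] x ext_mem(1)[of x n C1] by (simp add: D1_def)
  qed
  have dz1: "min_dist C1 \<le> wt_set (D1 - D2)"
  proof (rule wt_set_ge)
    fix x assume x: "x \<in> D1 - D2"
    have "min_dist C1 \<le> enat (hw (take n x))" unfolding min_dist_def
      using key[OF x] by (intro wt_set_le) auto
    also have "\<dots> \<le> enat (hw x)" using key[OF x] by simp
    finally show "min_dist C1 \<le> enat (hw x)" .
  qed
  have dz2: "min_dist C1 + 1 \<le> wt_set (D1 - D2)" if lt: "d_odd C1 < d_even C1"
  proof (rule wt_set_ge)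
    fix x assume x: "x \<in> D1 - D2"
    have mo: "min_dist C1 \<le> enat (hw (take n x))" unfolding min_dist_def
      using key[OF x] by (intro wt_set_le) auto
    show "min_dist C1 + 1 \<le> enat (hw x)"
    proof (cases "sum_list (take n x) = 0")
      case True
      have "d_even C1 \<le> enat (hw (take n x))" unfolding d_even_def
        using key[OF x] True by (intro wt_set_le) auto
      moreover have "min_dist C1 \<le> d_odd C1" unfolding min_dist_def d_odd_def
        by (rule wt_set_ge) (auto intro: wt_set_le)
      moreover have "d_odd C1 + 1 \<le> d_even C1" using lt
        by (metis eSuc_plus_1 ileI1)
      ultimately have "min_dist C1 + 1 \<le> enat (hw (take n x))"
        by (metis add_right_mono order_trans)
      then show ?thesis using key[OF x] True by simp
    next
      case False
      then have "hw x = hw (take n x) + 1" using key[OF x] by simp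
      have "min_dist C1 + 1 \<le> enat (hw (take n x)) + 1" by (rule add_right_mono[OF mo])
      also have "\<dots> = enat (hw x)" using \<open>hw x = hw (take n x) + 1\<close> by (simp add: one_enat_def)
      finally show ?thesis .
    qed
  qed
  show ?thesis using css dx dz1 dz2 by (auto simp: D2_def)
qed

end
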